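(* Let $\Gamma=(V,E)$ be a graph, $M_v$ ($v\in V$) monoids, and $M=\Gamma_{v\in V}M_v$. Let $a\in M$, $v\in V$ and $c\in M_v$. Suppose $a$ has final $v$-component $d$ and final $v$-complement $a'$. Then $ac$ has final $v$-component $dc$ and final $v$-complement $a'$.
   Context: A graph $\Gamma=(V,E)$ has vertex set $V$ and irreflexive symmetric edge relation $E$. The graph product $M=\Gamma_{v\in V}M_v$ of pairwise disjoint monoids $M_v$ is the quotient of their free product by the congruence generated by $(mn,nm)$ for $m\in M_u$, $n\in M_v$, $(u,v)\in E$; each $M_v$ is identified with its image in $M$. Let $X$ be the disjoint union of the sets $M_v\setminus\{1\}$, and for $m\in M_v\setminus\{1\}$ set $C(m)=v$. A word $x_1\circ\cdots\circ x_n\in X^*$ is an expression for $x_1\cdots x_n\in M$; it is reduced if whenever $i<j$ and $C(x_i)=C(x_j)$ there is $k$ with $i<k<j$ and $(C(x_i),C(x_k))\notin E$. For $a,a'\in M$ and $c\in M_v\setminus\{1\}$: $a$ has final $v$-component $c$ and final $v$-complement $a'$ if $a$ has a reduced expression $a_1\circ\cdots\circ a_m\circ c$ with $a_1\cdots a_m=a'$; and $a$ has final $v$-component $1$ and final $v$-complement $a$ if $a$ has a reduced expression $a_1\circ\cdots\circ a_m$ such that either (i) $C(a_j)\ne v$ for all $j$, or (ii) there is $k$ with $(C(a_k),v)\notin E$ and $C(a_j)\ne v$ for all $j\ge k$. Each element has exactly one final $v$-component and one final $v$-complement. *)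

theory Defs
  imports "HOL-Algebra.Group"
begin

(* Letters of X: pairs (v, m) with m a non-identity element of M_v; the tag v makes
   the union disjoint and C(v,m) = v. *)
definition gp_letter :: "('v \<Rightarrow> ('a,'b) monoid_scheme) \<Rightarrow> 'v \<times> 'a \<Rightarrow> bool" where
  "gp_letter Mv x \<longleftrightarrow> snd x \<in> carrier (Mv (fst x)) \<and> snd x \<noteq> \<one>\<^bsub>Mv (fst x)\<^esub>"

definition gp_word :: "('v \<Rightarrow> ('a,'b) monoid_scheme) \<Rightarrow> ('v \<times> 'a) list \<Rightarrow> bool" where
  "gp_word Mv w \<longleftrightarrow> (\<forall>x\<in>set w. gp_letter Mv x)"

(* One-step rewriting generating the congruence: the free product relations
   (multiplying adjacent letters from the same M_v) and the graph commutations. *)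
inductive gp_step :: "('v \<Rightarrow> 'v \<Rightarrow> bool) \<Rightarrow> ('v \<Rightarrow> ('a,'b) monoid_scheme)
    \<Rightarrow> ('v \<times> 'a) list \<Rightarrow> ('v \<times> 'a) list \<Rightarrow> bool" for E Mv where
  merge: "\<lbrakk>gp_letter Mv (v,m); gp_letter Mv (v,n); m \<otimes>\<^bsub>Mv v\<^esub> n \<noteq> \<one>\<^bsub>Mv v\<^esub>\<rbrakk>
     \<Longrightarrow> gp_step E Mv (u @ [(v,m),(v,n)] @ w) (u @ [(v, m \<otimes>\<^bsub>Mv v\<^esub> n)] @ w)"
| cancel: "\<lbrakk>gp_letter Mv (v,m); gp_letter Mv (v,n); m \<otimes>\<^bsub>Mv v\<^esub> n = \<one>\<^bsub>Mv v\<^esub>\<rbrakk>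
     \<Longrightarrow> gp_step E Mv (u @ [(v,m),(v,n)] @ w) (u @ w)"
| comm: "\<lbrakk>gp_letter Mv (v,m); gp_letter Mv (v',n); E v v'\<rbrakk>
     \<Longrightarrow> gp_step E Mv (u @ [(v,m),(v',n)] @ w) (u @ [(v',n),(v,m)] @ w)"

(* Equality in the graph product M: two words over X represent the same element.
   Multiplication in M is concatenation of representatives. *)
definition gp_eq :: "('v \<Rightarrow> 'v \<Rightarrow> bool) \<Rightarrow> ('v \<Rightarrow> ('a,'b) monoid_scheme)
    \<Rightarrow> ('v \<times> 'a) list \<Rightarrow> ('v \<times> 'a) list \<Rightarrow> bool" where
  "gp_eq E Mv = equivclp (gp_step E Mv)"

definition gp_emb :: "('v \<Rightarrow> ('a,'b) monoid_scheme) \<Rightarrow> 'v \<Rightarrow> 'a \<Rightarrow> ('v \<times> 'a) list" where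
  "gp_emb Mv v c = (if c = \<one>\<^bsub>Mv v\<^esub> then [] else [(v,c)])"

definition gp_reduced :: "('v \<Rightarrow> 'v \<Rightarrow> bool) \<Rightarrow> ('v \<times> 'a) list \<Rightarrow> bool" where
  "gp_reduced E w \<longleftrightarrow> (\<forall>i j. i < j \<and> j < length w \<and> fst (w!i) = fst (w!j) \<longrightarrow>
      (\<exists>k. i < k \<and> k < j \<and> \<not> E (fst (w!i)) (fst (w!k))))"

definition final_comp :: "('v \<Rightarrow> 'v \<Rightarrow> bool) \<Rightarrow> ('v \<Rightarrow> ('a,'b) monoid_scheme) \<Rightarrow> 'v
    \<Rightarrow> ('v \<times> 'a) list \<Rightarrow> 'a \<Rightarrow> ('v \<times> 'a) list \<Rightarrow> bool" where
  "final_comp E Mv v a d a' \<longleftrightarrow> d \<in> carrier (Mv v) \<and>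
     (if d \<noteq> \<one>\<^bsub>Mv v\<^esub> then
        (\<exists>ws. gp_word Mv (ws @ [(v,d)]) \<and> gp_reduced E (ws @ [(v,d)])
              \<and> gp_eq E Mv (ws @ [(v,d)]) a \<and> gp_eq E Mv ws a')
      else
        gp_eq E Mv a' a \<and>
        (\<exists>ws. gp_word Mv ws \<and> gp_reduced E ws \<and> gp_eq E Mv ws a \<and>
           ((\<forall>j<length ws. fst (ws!j) \<noteq> v) \<or>
            (\<exists>k<length ws. \<not> E (fst (ws!k)) v \<and>
               (\<forall>j. k \<le> j \<and> j < length ws \<longrightarrow> fst (ws!j) \<noteq> v)))))"

end

theory Submission
  imports Defs
begin

lemma step_app: "gp_step E Mv x y \<Longrightarrow> gp_step E Mv (x@z) (y@z)"
proof (induction rule: gp_step.induct)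
  case (merge v m n u w)
  then show ?case using gp_step.merge[of Mv v m n E u "w@z"] by simp
next
  case (cancel v m n u w)
  then show ?case using gp_step.cancel[of Mv v m n E u "w@z"] by simp
next
  case (comm v m v' n u w)
  then show ?case using gp_step.comm[of Mv v m v' n E u "w@z"] by simp
qed

lemma eq_app: "gp_eq E Mv x y \<Longrightarrow> gp_eq E Mv (x@z) (y@z)"
  unfolding gp_eq_def
proof (induction rule: equivclp_induct)
  case base then show ?case by simp
next
  case (step y w)
  then show ?case using step_app
    by (meson equivclp_into_equivclp)
qed

lemma reduced_map: "gp_reduced E w \<longleftrightarrow> (\<forall>i j. i < j \<and> j < length (map fst w) \<and> (map fst w)!i = (map fst w)!j \<longrightarrow>
      (\<exists>k. i < k \<and> k < j \<and> \<not> E ((map fst w)!i) ((map fst w)!k)))"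
  unfolding gp_reduced_def
proof (intro iffI allI impI)
  fix i j assume H: "\<forall>i j. i < j \<and> j < length w \<and> fst (w ! i) = fst (w ! j) \<longrightarrow>
          (\<exists>k>i. k < j \<and> \<not> E (fst (w ! i)) (fst (w ! k)))"
    and ij: "i < j \<and> j < length (map fst w) \<and> map fst w ! i = map fst w ! j"
  from ij have il: "i < length w" by simp
  from ij il have "i < j \<and> j < length w \<and> fst (w ! i) = fst (w ! j)" by simp
  with H obtain k where "k>i" "k<j" "\<not> E (fst (w ! i)) (fst (w ! k))" by blast
  then show "\<exists>k>i. k < j \<and> \<not> E (map fst w ! i) (map fst w ! k)" using ij by auto
next
  fix i j assume H: "\<forall>i j. i < j \<and> j < length (map fst w) \<and> map fst w ! i = map fst w ! j \<longrightarrow>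
          (\<exists>k>i. k < j \<and> \<not> E (map fst w ! i) (map fst w ! k))"
    and ij: "i < j \<and> j < length w \<and> fst (w ! i) = fst (w ! j)"
  from ij have "i < j \<and> j < length (map fst w) \<and> map fst w ! i = map fst w ! j" by simp
  with H obtain k where "k>i" "k<j" "\<not> E (map fst w ! i) (map fst w ! k)" by blast
  then show "\<exists>k>i. k < j \<and> \<not> E (fst (w ! i)) (fst (w ! k))" using ij by auto
qed

lemma reduced_last: "gp_reduced E (ws@[(v,d)]) \<Longrightarrow> gp_reduced E (ws@[(v,e)])"
  by (subst reduced_map, subst (asm) reduced_map, simp)

lemma reduced_prefix: "gp_reduced E (ws@[x]) \<Longrightarrow> gp_reduced E ws"
  unfolding gp_reduced_def
proof (intro allI impI)
  fix i j assume H: "\<forall>i j. i < j \<and> j < length (ws @ [x]) \<and> fst ((ws @ [x]) ! i) = fst ((ws @ [x]) ! j) \<longrightarrow>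
             (\<exists>k>i. k < j \<and> \<not> E (fst ((ws @ [x]) ! i)) (fst ((ws @ [x]) ! k)))"
    and ij: "i < j \<and> j < length ws \<and> fst (ws ! i) = fst (ws ! j)"
  then have "i < j \<and> j < length (ws @ [x]) \<and> fst ((ws @ [x]) ! i) = fst ((ws @ [x]) ! j)"
    by (simp add: nth_append)
  with H obtain k where k: "k>i" "k<j" "\<not> E (fst ((ws @ [x]) ! i)) (fst ((ws @ [x]) ! k))"
    by blast
  have "(ws @ [x]) ! i = ws ! i" "(ws @ [x]) ! k = ws ! k" using k ij by (simp_all add: nth_append)
  then show "\<exists>k>i. k < j \<and> \<not> E (fst (ws ! i)) (fst (ws ! k))" using k by metis
qed

lemma final_cond:
  assumes irrefl: "\<And>u. \<not> E u u" and sym: "\<And>u w. E u w \<Longrightarrow> E w u"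
    and red: "gp_reduced E (ws@[(v,d)])"
  shows "(\<forall>j<length ws. fst (ws!j) \<noteq> v) \<or>
            (\<exists>k<length ws. \<not> E (fst (ws!k)) v \<and>
               (\<forall>j. k \<le> j \<and> j < length ws \<longrightarrow> fst (ws!j) \<noteq> v))"
proof (cases "\<exists>j<length ws. fst (ws!j) = v")
  case False then show ?thesis by auto
next
  case True
  define i where "i = (GREATEST j. j < length ws \<and> fst (ws!j) = v)"
  have bnd: "\<forall>y. y < length ws \<and> fst (ws!y) = v \<longrightarrow> y \<le> length ws" by auto
  have iP: "i < length ws \<and> fst (ws!i) = v" unfolding i_def
    using GreatestI_ex_nat[OF True] bnd by (metis (mono_tags, lifting) GreatestI_nat True less_imp_le_nat)
  have iM: "\<And>j. j < length ws \<Longrightarrow> fst (ws!j) = v \<Longrightarrow> j \<le> i" unfolding i_def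
    by (metis (mono_tags, lifting) Greatest_le_nat less_imp_le_nat)
  from red iP obtain k where k: "k>i" "k < length ws" "\<not> E v (fst ((ws@[(v,d)])!k))"
    unfolding gp_reduced_def
    by (metis (no_types, lifting) fst_conv length_append_singleton less_Suc_eq nth_append nth_append_length)
  have "\<not> E (fst (ws!k)) v" using k sym by (metis nth_append)
  moreover have "\<forall>j. k \<le> j \<and> j < length ws \<longrightarrow> fst (ws!j) \<noteq> v" using iM k by fastforce
  ultimately show ?thesis using k by blast
qed

lemma reduced_snoc:
  assumes red: "gp_reduced E ws" and irrefl: "\<And>u. \<not> E u u" and sym: "\<And>u w. E u w \<Longrightarrow> E w u"
    and cond: "(\<forall>j<length ws. fst (ws!j) \<noteq> v) \<or>
            (\<exists>k<length ws. \<not> E (fst (ws!k)) v \<and>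
               (\<forall>j. k \<le> j \<and> j < length ws \<longrightarrow> fst (ws!j) \<noteq> v))"
  shows "gp_reduced E (ws@[(v,c)])"
  unfolding gp_reduced_def
proof (intro allI impI)
  fix i j assume ij: "i < j \<and> j < length (ws@[(v,c)]) \<and> fst ((ws@[(v,c)]) ! i) = fst ((ws@[(v,c)]) ! j)"
  show "\<exists>k>i. k < j \<and> \<not> E (fst ((ws @ [(v,c)]) ! i)) (fst ((ws @ [(v,c)]) ! k))"
  proof (cases "j < length ws")
    case True
    have il: "i < length ws" using True ij by simp
    have ij': "i < j \<and> j < length ws \<and> fst (ws ! i) = fst (ws ! j)" using True ij il by (simp add: nth_append)
    with red obtain k where k: "k>i" "k<j" "\<not> E (fst (ws ! i)) (fst (ws ! k))"
      unfolding gp_reduced_def by blast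
    have "(ws @ [(v,c)]) ! i = ws ! i" "(ws @ [(v,c)]) ! k = ws ! k" using k True ij by (simp_all add: nth_append)
    then show ?thesis using k by metis
  next
    case False
    then have j: "j = length ws" using ij by auto
    then have iv: "fst (ws!i) = v" "i < length ws" using ij by (auto simp: nth_append)
    then obtain k where k: "k<length ws" "\<not> E (fst (ws!k)) v"
               "\<forall>j. k \<le> j \<and> j < length ws \<longrightarrow> fst (ws!j) \<noteq> v" using cond by blast
    have "k > i"
    proof (rule ccontr)
      assume "\<not> k>i" then have "k \<le> i" by simp
      then show False using k(3) iv by blast
    qed
    then show ?thesis using k iv j sym by (metis nth_append)
  qed
qed

theorem lemma1p4:
  fixes E :: "'v \<Rightarrow> 'v \<Rightarrow> bool"
    and Mv :: "'v \<Rightarrow> ('a,'b) monoid_scheme"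
  assumes irrefl: "\<And>u. \<not> E u u"
    and sym: "\<And>u w. E u w \<Longrightarrow> E w u"
    and mon: "\<And>u. monoid (Mv u)"
    and a: "gp_word Mv a" and a': "gp_word Mv a'"
    and c: "c \<in> carrier (Mv v)"
    and fin: "final_comp E Mv v a d a'"
  shows "final_comp E Mv v (a @ gp_emb Mv v c) (d \<otimes>\<^bsub>Mv v\<^esub> c) a'"
proof -
  interpret M: monoid "Mv v" by (rule mon)
  have dC: "d \<in> carrier (Mv v)" using fin unfolding final_comp_def by simp
  have dcC: "d \<otimes>\<^bsub>Mv v\<^esub> c \<in> carrier (Mv v)" using dC c by simp
  show ?thesis
  proof (cases "c = \<one>\<^bsub>Mv v\<^esub>")
    case True
    then show ?thesis using fin dC by (simp add: gp_emb_def)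
  next
    case cne: False
    have emb: "gp_emb Mv v c = [(v,c)]" using cne by (simp add: gp_emb_def)
    have lc: "gp_letter Mv (v,c)" using c cne by (simp add: gp_letter_def)
    show ?thesis
    proof (cases "d = \<one>\<^bsub>Mv v\<^esub>")
      case True
      then have dc: "d \<otimes>\<^bsub>Mv v\<^esub> c = c" using c by simp
      from fin True obtain ws where ws: "gp_word Mv ws" "gp_reduced E ws" "gp_eq E Mv ws a"
        "(\<forall>j<length ws. fst (ws!j) \<noteq> v) \<or>
            (\<exists>k<length ws. \<not> E (fst (ws!k)) v \<and>
               (\<forall>j. k \<le> j \<and> j < length ws \<longrightarrow> fst (ws!j) \<noteq> v))" and aa: "gp_eq E Mv a' a"
        unfolding final_comp_def by auto
      have "gp_word Mv (ws@[(v,c)])" using ws lc by (simp add: gp_word_def)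
      moreover have "gp_reduced E (ws@[(v,c)])" using reduced_snoc[OF ws(2) irrefl sym ws(4)] .
      moreover have "gp_eq E Mv (ws@[(v,c)]) (a@[(v,c)])" using eq_app[OF ws(3)] .
      moreover have "gp_eq E Mv ws a'" using ws(3) aa unfolding gp_eq_def
        by (meson equivclp_sym equivclp_trans)
      ultimately show ?thesis using dc cne c unfolding final_comp_def emb by auto
    next
      case dne: False
      from fin dne obtain ws where ws: "gp_word Mv (ws @ [(v,d)])" "gp_reduced E (ws @ [(v,d)])"
              "gp_eq E Mv (ws @ [(v,d)]) a" "gp_eq E Mv ws a'"
        unfolding final_comp_def by auto
      have e1: "gp_eq E Mv (a@[(v,c)]) (ws @ [(v,d),(v,c)])"
        using eq_app[OF ws(3), of "[(v,c)]"] unfolding gp_eq_def by (simp add: equivclp_sym)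
      have ld: "gp_letter Mv (v,d)" using dC dne by (simp add: gp_letter_def)
      show ?thesis
      proof (cases "d \<otimes>\<^bsub>Mv v\<^esub> c = \<one>\<^bsub>Mv v\<^esub>")
        case True
        have "gp_step E Mv (ws @ [(v,d),(v,c)] @ []) (ws @ [])"
          by (rule gp_step.cancel[OF ld lc True])
        then have "gp_eq E Mv (ws @ [(v,d),(v,c)]) ws" unfolding gp_eq_def by auto
        then have e2: "gp_eq E Mv ws (a@[(v,c)])" using e1 unfolding gp_eq_def
          by (meson equivclp_sym equivclp_trans)
        have "gp_eq E Mv a' (a@[(v,c)])" using e2 ws(4) unfolding gp_eq_def
          by (meson equivclp_sym equivclp_trans)
        moreover have "gp_word Mv ws" using ws(1) by (simp add: gp_word_def)
        moreover have "gp_reduced E ws" using reduced_prefix[OF ws(2)] .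
        moreover note final_cond[OF irrefl sym ws(2)]
        ultimately show ?thesis unfolding final_comp_def emb
          apply (intro conjI[OF dcC])
          apply (subst if_not_P)
          using True apply simp
          using e2 by blast
      next
        case False
        have "gp_step E Mv (ws @ [(v,d),(v,c)] @ []) (ws @ [(v, d \<otimes>\<^bsub>Mv v\<^esub> c)] @ [])"
          by (rule gp_step.merge[OF ld lc False])
        then have "gp_eq E Mv (ws @ [(v,d),(v,c)]) (ws @ [(v, d \<otimes>\<^bsub>Mv v\<^esub> c)])"
          unfolding gp_eq_def by auto
        then have e2: "gp_eq E Mv (ws @ [(v, d \<otimes>\<^bsub>Mv v\<^esub> c)]) (a@[(v,c)])" using e1 unfolding gp_eq_def
          by (meson equivclp_sym equivclp_trans)
        have "gp_word Mv (ws @ [(v, d \<otimes>\<^bsub>Mv v\<^esub> c)])" using ws(1) dcC False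
          by (simp add: gp_word_def gp_letter_def)
        moreover have "gp_reduced E (ws @ [(v, d \<otimes>\<^bsub>Mv v\<^esub> c)])" using reduced_last[OF ws(2)] .
        ultimately show ?thesis unfolding final_comp_def emb
          apply (intro conjI[OF dcC])
          apply (subst if_P)
          using False apply simp
          using e2 ws(4) by blast
      qed
    qed
  qed
qed

end
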